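(* Let $c\in\mathbb{C}$ with $\operatorname{Re}(c)<-1$. Then $\overline{\sigma_c(\mathbb{N})}=\sigma_c(\mathbb{S})$, where the closure is taken in $\mathbb{C}$.
   Context: For $c\in\mathbb{C}$, $\sigma_c(n)=\sum_{d\mid n}d^c$ for $n\in\mathbb{N}$. A Steinitz (supernatural) number is a formal product $n=\prod_{p}p^{\alpha_p}$ over all primes with $\alpha_p\in\mathbb{Z}_{\ge0}\cup\{\infty\}$; $\mathbb{S}$ is the set of all Steinitz numbers. For $\operatorname{Re}(c)<-1$, $\sigma_c$ is extended to $\mathbb{S}$ multiplicatively: $\sigma_c(n)=\prod_p\sigma_c(p^{\alpha_p})$, with $\sigma_c(p^\alpha)=\sum_{i=0}^\alpha p^{ci}$ for finite $\alpha$ and $\sigma_c(p^\infty)=\lim_{k\to\infty}\sigma_c(p^k)=\frac{1}{1-p^c}$. *)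

theory Defs
  imports "HOL-Analysis.Analysis" "HOL-Computational_Algebra.Primes" "HOL-Library.Extended_Nat"
begin

definition sigma_nat :: "complex \<Rightarrow> nat \<Rightarrow> complex" where
  "sigma_nat c n = (\<Sum>d | d dvd n. (of_nat d) powr c)"

text \<open>Steinitz numbers: exponent functions on primes, values in N \<union> {\<infinity>};
  represented as functions nat => enat that vanish off the primes.\<close>
definition steinitz :: "(nat \<Rightarrow> enat) set" where
  "steinitz = {a. \<forall>n. \<not> prime n \<longrightarrow> a n = 0}"

definition sigma_pp :: "complex \<Rightarrow> nat \<Rightarrow> enat \<Rightarrow> complex" where
  "sigma_pp c p a = (case a of
      enat k \<Rightarrow> (\<Sum>i\<le>k. (of_nat (p ^ i)) powr c)
    | \<infinity> \<Rightarrow> 1 / (1 - (of_nat p) powr c))"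

definition sigma_steinitz :: "complex \<Rightarrow> (nat \<Rightarrow> enat) \<Rightarrow> complex" where
  "sigma_steinitz c a = (\<Prod>n. (if prime n then sigma_pp c n (a n) else 1))"

end

theory Submission imports Defs begin

lemma powr_nat_mult:
  fixes c :: complex
  shows "(of_nat (a * b) :: complex) powr c = of_nat a powr c * of_nat b powr c"
  by (simp add: powr_times_real)

lemma powr_nat_mult':
  fixes c :: complex
  shows "(of_nat a * of_nat b :: complex) powr c = of_nat a powr c * of_nat b powr c"
  by (metis of_nat_mult powr_nat_mult)

lemma powr_nat_power:
  fixes c :: complex
  shows "(of_nat (p ^ i) :: complex) powr c = (of_nat p powr c) ^ i"
proof (induction i)
  case 0
  then show ?case by simp
next
  case (Suc i)
  then show ?case by (simp only: power_Suc powr_nat_mult)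
qed

lemma sigma_nat_mult_coprime:
  fixes m k :: nat
  assumes cop: "coprime m k" and m: "m > 0" and k: "k > 0"
  shows "sigma_nat c (m*k) = sigma_nat c m * sigma_nat c k"
proof -
  let ?g = "\<lambda>d::nat. (of_nat d :: complex) powr c"
  let ?A = "{d. d dvd m}" let ?B = "{d. d dvd k}"
  have fin: "finite ?A" "finite ?B" using m k by auto
  have inj: "inj_on (\<lambda>(a,b). a*b) (?A \<times> ?B)"
  proof (rule inj_onI, clarify)
    fix a b a' b' assume h: "a dvd m" "b dvd k" "a' dvd m" "b' dvd k" "a*b = a'*b'"
    have c1: "coprime a b'" using coprime_divisors h cop by blast
    have c2: "coprime a' b" using coprime_divisors h cop by blast
    have "a dvd a' * b'" using h(5) by (metis dvd_triv_left)
    then have "a dvd a'" using c1 by (simp add: coprime_dvd_mult_left_iff)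
    moreover have "a' dvd a * b" using h(5) by (metis dvd_triv_left)
    then have "a' dvd a" using c2 by (simp add: coprime_dvd_mult_left_iff)
    ultimately have "a = a'" by (simp add: dvd_antisym)
    moreover have "a > 0" using h(1) m by (metis dvd_pos_nat)
    ultimately show "a = a' \<and> b = b'" using h(5) by simp
  qed
  have img: "(\<lambda>(a,b). a*b) ` (?A \<times> ?B) = {d. d dvd m*k}"
  proof
    show "(\<lambda>(a,b). a*b) ` (?A \<times> ?B) \<subseteq> {d. d dvd m*k}" by (auto intro: mult_dvd_mono)
    show "{d. d dvd m*k} \<subseteq> (\<lambda>(a,b). a*b) ` (?A \<times> ?B)"
    proof
      fix d assume "d \<in> {d. d dvd m*k}"
      then obtain x y where "d = x*y" "x dvd m" "y dvd k" by (auto elim: dvd_productE)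
      then show "d \<in> (\<lambda>(a,b). a*b) ` (?A \<times> ?B)" by auto
    qed
  qed
  have "sigma_nat c (m*k) = sum ?g ((\<lambda>(a,b). a*b) ` (?A \<times> ?B))"
    unfolding sigma_nat_def img ..
  also have "\<dots> = (\<Sum>(a,b)\<in>?A \<times> ?B. ?g (a*b))"
    by (subst sum.reindex[OF inj]) (simp add: case_prod_beta)
  also have "\<dots> = (\<Sum>(a,b)\<in>?A \<times> ?B. ?g a * ?g b)"
    by (simp only: powr_nat_mult)
  also have "\<dots> = sum ?g ?A * sum ?g ?B"
    by (simp add: sum_product sum.cartesian_product)
  finally show ?thesis unfolding sigma_nat_def .
qed

lemma sigma_nat_prime_power:
  assumes p: "prime p"
  shows "sigma_nat c (p ^ k) = sigma_pp c p (enat k)"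
proof -
  have img: "{d. d dvd p ^ k} = (\<lambda>i. p ^ i) ` {..k}"
    using divides_primepow_nat[OF p] by auto
  have inj: "inj_on (\<lambda>i. p ^ i) {..k}"
    using p prime_gt_1_nat by (auto intro!: inj_onI simp: power_inject_exp)
  show ?thesis
    unfolding sigma_nat_def sigma_pp_def img
    by (simp only: sum.reindex[OF inj] o_def enat.case)
qed

lemma sigma_nat_one: "sigma_nat c (Suc 0) = 1"
  unfolding sigma_nat_def by simp

lemma sigma_nat_prod:
  assumes "finite S" "\<forall>p\<in>S. prime p"
  shows "sigma_nat c (\<Prod>p\<in>S. p ^ e p) = (\<Prod>p\<in>S. sigma_pp c p (enat (e p)))"
  using assms
proof (induction S rule: finite_induct)
  case empty
  then show ?case by (simp add: sigma_nat_one)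
next
  case (insert p S)
  have pp: "prime p" using insert by auto
  have cop: "coprime (p ^ e p) (\<Prod>q\<in>S. q ^ e q)"
  proof -
    have "coprime p (q ^ e q)" if "q \<in> S" for q
    proof -
      have "q \<noteq> p" "prime q" using insert that by auto
      then have "coprime p q" using pp by (simp add: primes_coprime)
      then show ?thesis by simp
    qed
    then have "coprime p (\<Prod>q\<in>S. q ^ e q)" by (rule prod_coprime_right)
    then show ?thesis by (simp add: coprime_power_left_iff)
  qed
  have pos1: "p ^ e p > 0" using pp prime_gt_0_nat by simp
  have pos2: "(\<Prod>q\<in>S. q ^ e q) > 0"
    by (intro prod_pos) (use insert in \<open>auto simp: prime_gt_0_nat\<close>)
  show ?case
    using insert pp by (simp add: sigma_nat_mult_coprime[OF cop pos1 pos2] sigma_nat_prime_power)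
qed

lemma sigma_pp_zero: "sigma_pp c p 0 = 1"
  unfolding sigma_pp_def zero_enat_def by simp

lemma sigma_steinitz_fin:
  assumes "finite S" "\<forall>p\<in>S. prime p"
  shows "sigma_steinitz c (\<lambda>p. if p \<in> S then enat (e p) else 0) = (\<Prod>p\<in>S. sigma_pp c p (enat (e p)))"
  unfolding sigma_steinitz_def
  using assms by (subst prodinf_finite[of S]) (auto simp: sigma_pp_zero intro!: prod.cong)

lemma fin_in_steinitz:
  assumes "\<forall>p\<in>S. prime p"
  shows "(\<lambda>p. if p \<in> S then enat (e p) else 0) \<in> steinitz"
  using assms unfolding steinitz_def by auto


definition qq :: "complex \<Rightarrow> nat \<Rightarrow> complex" where "qq c p = of_nat p powr c"
definition ee :: "complex \<Rightarrow> nat \<Rightarrow> enat \<Rightarrow> complex" where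
  "ee c p a = (case a of enat k \<Rightarrow> qq c p ^ Suc k | \<infinity> \<Rightarrow> 0)"
definition ff :: "complex \<Rightarrow> nat \<Rightarrow> complex \<Rightarrow> complex" where
  "ff c p y = (if prime p then (1 - y) / (1 - qq c p) else 1)"
definition DD :: "complex \<Rightarrow> nat \<Rightarrow> complex set" where
  "DD c p = (if prime p then insert 0 (range (\<lambda>k. qq c p ^ Suc k)) else {0})"
definition TT :: "complex \<Rightarrow> (nat \<Rightarrow> complex) set" where
  "TT c = PiE UNIV (DD c)"
definition EE :: "complex \<Rightarrow> (nat \<Rightarrow> enat) \<Rightarrow> nat \<Rightarrow> complex" where
  "EE c a = (\<lambda>p. if prime p then ee c p (a p) else 0)"
definition GG :: "complex \<Rightarrow> (nat \<Rightarrow> complex) \<Rightarrow> complex" where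
  "GG c x = (\<Prod>p. ff c p (x p))"

lemma norm_qq: "norm (qq c p) = real p powr Re c"
  by (simp add: qq_def norm_powr_real_powr)

lemma norm_qq_le:
  assumes "Re c < -1" "prime p"
  shows "norm (qq c p) \<le> 1/2"
proof -
  have p2: "real p \<ge> 2" using assms(2) prime_ge_2_nat by auto
  have "real p powr Re c \<le> real p powr (-1)"
    using assms p2 by (intro powr_mono) auto
  also have "\<dots> = 1 / real p" using p2 by (simp add: powr_minus_divide)
  also have "\<dots> \<le> 1/2" using p2 by (simp add: field_simps)
  finally show ?thesis by (simp add: norm_qq)
qed

lemma qq_ne1:
  assumes "Re c < -1" "prime p"
  shows "1 - qq c p \<noteq> 0"
proof
  assume "1 - qq c p = 0"
  then have "qq c p = 1" by simp
  then show False using norm_qq_le[OF assms] by simp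
qed

lemma norm_one_minus_qq:
  assumes "Re c < -1" "prime p"
  shows "norm (1 - qq c p) \<ge> 1/2"
proof -
  have "norm (1::complex) - norm (qq c p) \<le> norm (1 - qq c p)" by (rule norm_triangle_ineq2)
  then show ?thesis using norm_qq_le[OF assms] by simp
qed

lemma sigma_pp_ff:
  assumes "Re c < -1" "prime p"
  shows "sigma_pp c p a = ff c p (ee c p a)"
proof (cases a)
  case (enat k)
  have "sigma_pp c p a = (\<Sum>i<Suc k. qq c p ^ i)"
    unfolding enat sigma_pp_def qq_def by (simp del: of_nat_power add: powr_nat_power lessThan_Suc_atMost)
  also have "\<dots> = (1 - qq c p ^ Suc k) / (1 - qq c p)"
    using qq_ne1[OF assms] by (subst sum_gp_strict) simp
  finally show ?thesis using assms unfolding ff_def ee_def enat by simp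
next
  case infinity
  then show ?thesis using assms unfolding ff_def ee_def sigma_pp_def qq_def by simp
qed

lemma sigma_steinitz_GG:
  assumes "Re c < -1" "a \<in> steinitz"
  shows "sigma_steinitz c a = GG c (EE c a)"
  unfolding sigma_steinitz_def GG_def EE_def
  by (intro arg_cong[where f=prodinf] ext) (auto simp: sigma_pp_ff[OF assms(1)] ff_def)

lemma EE_in_TT: "EE c a \<in> TT c"
  unfolding TT_def EE_def DD_def ee_def by (auto split: enat.split)

lemma TT_EE:
  assumes "x \<in> TT c"
  shows "\<exists>a\<in>steinitz. x = EE c a"
proof -
  have x: "x p \<in> DD c p" for p using assms unfolding TT_def by auto
  define a where "a = (\<lambda>p. if prime p then (if x p = 0 then \<infinity> else enat (SOME k. x p = qq c p ^ Suc k)) else (0::enat))"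
  have "a \<in> steinitz" unfolding steinitz_def a_def by auto
  moreover have "x p = EE c a p" for p
  proof (cases "prime p")
    case True
    show ?thesis
    proof (cases "x p = 0")
      case True
      then show ?thesis using \<open>prime p\<close> by (simp add: EE_def a_def ee_def)
    next
      case False
      then have "\<exists>k. x p = qq c p ^ Suc k" using x[of p] \<open>prime p\<close> by (auto simp: DD_def)
      then have "x p = qq c p ^ Suc (SOME k. x p = qq c p ^ Suc k)" by (rule someI_ex)
      then show ?thesis using \<open>prime p\<close> False by (simp add: EE_def a_def ee_def)
    qed
  next
    case False
    then show ?thesis using x[of p] by (simp add: EE_def DD_def)
  qed
  ultimately show ?thesis by auto
qed

lemma DD_norm:
  assumes "Re c < -1" "y \<in> DD c p" "prime p"
  shows "norm y \<le> norm (qq c p)"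
proof -
  have q1: "norm (qq c p) \<le> 1" using norm_qq_le[OF assms(1,3)] by simp
  have "norm (qq c p ^ Suc k) \<le> norm (qq c p)" for k
  proof -
    have "norm (qq c p ^ Suc k) = norm (qq c p) * norm (qq c p) ^ k" by (simp add: norm_mult norm_power)
    also have "\<dots> \<le> norm (qq c p) * 1" using q1 by (intro mult_left_mono power_le_one) auto
    finally show ?thesis by simp
  qed
  then show ?thesis using assms(2,3) by (auto simp: DD_def)
qed

lemma compact_DD:
  assumes "Re c < -1"
  shows "compact (DD c p)"
proof (cases "prime p")
  case True
  have "(\<lambda>k. qq c p ^ k) \<longlonglongrightarrow> 0"
    using norm_qq_le[OF assms True] by (intro LIMSEQ_power_zero) simp
  then have "(\<lambda>k. qq c p ^ Suc k) \<longlonglongrightarrow> 0" by (rule LIMSEQ_Suc)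
  then show ?thesis using True unfolding DD_def by (simp add: compact_sequence_with_limit)
next
  case False
  then show ?thesis unfolding DD_def by simp
qed

lemma compact_TT:
  assumes "Re c < -1"
  shows "compact (TT c)"
proof -
  have "compactin (product_topology (\<lambda>i. euclidean) UNIV) (PiE UNIV (DD c))"
    by (subst compactin_PiE) (simp add: compact_DD[OF assms])
  then show ?thesis by (simp add: TT_def euclidean_product_topology)
qed

lemma ff_bound:
  assumes "Re c < -1" "x \<in> TT c"
  shows "norm (ff c p (x p) - 1) \<le> 4 * real p powr Re c"
proof (cases "prime p")
  case True
  have y: "norm (x p) \<le> norm (qq c p)" using assms DD_norm[OF assms(1) _ True] unfolding TT_def by auto
  have ne: "1 - qq c p \<noteq> 0" using qq_ne1[OF assms(1) True] .
  have "ff c p (x p) - 1 = (qq c p - x p) / (1 - qq c p)"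
    using True ne by (simp add: ff_def field_simps)
  also have "norm \<dots> = norm (qq c p - x p) / norm (1 - qq c p)" by (simp add: norm_divide)
  also have "\<dots> \<le> (2 * norm (qq c p)) / (1/2)"
  proof (rule frac_le)
    show "norm (qq c p - x p) \<le> 2 * norm (qq c p)"
      using norm_triangle_ineq4[of "qq c p" "x p"] y by simp
    show "1/2 \<le> norm (1 - qq c p)" by (rule norm_one_minus_qq[OF assms(1) True])
  qed auto
  finally show ?thesis by (simp add: norm_qq)
next
  case False
  then show ?thesis by (simp add: ff_def)
qed

lemma ff_nz:
  assumes "Re c < -1" "x \<in> TT c"
  shows "ff c p (x p) \<noteq> 0"
proof (cases "prime p")
  case True
  have y: "norm (x p) \<le> 1/2" using assms DD_norm[OF assms(1) _ True] norm_qq_le[OF assms(1) True]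
    unfolding TT_def by force
  have "1 - x p \<noteq> 0"
  proof
    assume "1 - x p = 0" then have "x p = 1" by simp
    then show False using y by simp
  qed
  then show ?thesis using True qq_ne1[OF assms(1) True] by (simp add: ff_def)
next
  case False
  then show ?thesis by (simp add: ff_def)
qed

lemma summable_M:
  assumes "Re c < -1"
  shows "summable (\<lambda>p. 4 * real p powr Re c)"
  using assms by (intro summable_mult) (simp add: summable_real_powr_iff)

lemma GG_cont:
  assumes c: "Re c < -1"
  shows "continuous_on (TT c) (GG c)"
proof -
  have cont: "continuous_on (TT c) (\<lambda>x. ff c n (x n))" for n
  proof -
    have "continuous_on (TT c) (\<lambda>x::nat\<Rightarrow>complex. x n)"
      by (rule continuous_on_subset[OF continuous_on_product_coordinates]) simp
    then show ?thesis unfolding ff_def using qq_ne1[OF c]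
      by (cases "prime n") (auto intro!: continuous_intros)
  qed
  have uc: "uniformly_convergent_on (TT c) (\<lambda>N x. \<Prod>n<N. ff c n (x n))"
  proof (rule uniformly_convergent_on_prod'[OF cont compact_TT[OF c]])
    show "uniformly_convergent_on (TT c) (\<lambda>N x. \<Sum>n<N. norm (ff c n (x n) - 1))"
      by (rule Weierstrass_m_test'[OF _ summable_M[OF c]]) (simp add: ff_bound[OF c])
  qed
  then have ul: "uniform_limit (TT c) (\<lambda>N x. \<Prod>n<N. ff c n (x n)) (\<lambda>x. lim (\<lambda>N. \<Prod>n<N. ff c n (x n))) sequentially"
    using uniformly_convergent_uniform_limit_iff by blast
  have "continuous_on (TT c) (\<lambda>x. lim (\<lambda>N. \<Prod>n<N. ff c n (x n)))"
    by (rule uniform_limit_theorem[OF _ ul]) (auto intro!: always_eventually continuous_on_prod cont)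
  moreover have "lim (\<lambda>N. \<Prod>n<N. ff c n (x n)) = GG c x" if x: "x \<in> TT c" for x
  proof -
    have "summable (\<lambda>n. norm (ff c n (x n) - 1))"
      by (rule summable_comparison_test'[OF summable_M[OF c]]) (simp add: ff_bound[OF c x])
    then have "convergent_prod (\<lambda>n. ff c n (x n))"
      by (intro abs_convergent_prod_imp_convergent_prod summable_imp_abs_convergent_prod)
    then show ?thesis unfolding GG_def
      by (subst prodinf_eq_lim') (auto simp: ff_nz[OF c x])
  qed
  ultimately show ?thesis by (metis (mono_tags, lifting) continuous_on_cong)
qed


lemma tendsto_fun_componentwise:
  fixes X :: "'a \<Rightarrow> nat \<Rightarrow> complex"
  assumes "\<And>i. ((\<lambda>n. X n i) \<longlongrightarrow> l i) F"
  shows "(X \<longlongrightarrow> l) F"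
proof -
  have "limitin (product_topology (\<lambda>i. euclidean) UNIV) X l F"
    using assms by (simp add: limitin_componentwise)
  then show ?thesis by (simp add: euclidean_product_topology)
qed

theorem mainTheorem4:
  fixes c :: complex
  assumes "Re c < -1"
  shows "closure (sigma_nat c ` {n. n \<ge> 1}) = sigma_steinitz c ` steinitz"
proof
  have img: "sigma_steinitz c ` steinitz = GG c ` TT c"
  proof
    show "sigma_steinitz c ` steinitz \<subseteq> GG c ` TT c"
      using sigma_steinitz_GG[OF assms] EE_in_TT by blast
    show "GG c ` TT c \<subseteq> sigma_steinitz c ` steinitz"
    proof
      fix z assume "z \<in> GG c ` TT c"
      then obtain x where x: "x \<in> TT c" "z = GG c x" by auto
      then obtain a where "a \<in> steinitz" "x = EE c a" using TT_EE by blast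
      then show "z \<in> sigma_steinitz c ` steinitz" using x sigma_steinitz_GG[OF assms] by auto
    qed
  qed
  have closed: "closed (sigma_steinitz c ` steinitz)"
    unfolding img
    by (intro compact_imp_closed compact_continuous_image GG_cont compact_TT assms)
  have sub: "sigma_nat c ` {n. n \<ge> 1} \<subseteq> sigma_steinitz c ` steinitz"
  proof
    fix z assume "z \<in> sigma_nat c ` {n. n \<ge> 1}"
    then obtain n where n: "n \<ge> 1" "z = sigma_nat c n" by auto
    let ?S = "prime_factors n"
    let ?a = "\<lambda>p. if p \<in> ?S then enat (multiplicity p n) else 0"
    have pr: "\<forall>p\<in>?S. prime p" by auto
    have "z = sigma_nat c (\<Prod>p\<in>?S. p ^ multiplicity p n)"
      using n prime_factorization_nat[of n] by simp
    also have "\<dots> = sigma_steinitz c ?a"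
      by (simp add: sigma_nat_prod[OF _ pr] sigma_steinitz_fin[OF _ pr])
    finally show "z \<in> sigma_steinitz c ` steinitz"
      using fin_in_steinitz[OF pr, of "\<lambda>p. multiplicity p n"] by blast
  qed
  show "closure (sigma_nat c ` {n. n \<ge> 1}) \<subseteq> sigma_steinitz c ` steinitz"
    using closure_minimal[OF sub closed] .
  show "sigma_steinitz c ` steinitz \<subseteq> closure (sigma_nat c ` {n. n \<ge> 1})"
  proof
    fix z assume "z \<in> sigma_steinitz c ` steinitz"
    then obtain a where a: "a \<in> steinitz" "z = sigma_steinitz c a" by auto
    define m where "m = (\<lambda>N p. case a p of enat k \<Rightarrow> min k N | \<infinity> \<Rightarrow> N)"
    define S where "S = (\<lambda>N::nat. {p. prime p \<and> p < N})"
    define b where "b = (\<lambda>N p. if p \<in> S N then enat (m N p) else 0)"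
    have finS: "finite (S N)" for N unfolding S_def by auto
    have prS: "\<forall>p\<in>S N. prime p" for N unfolding S_def by auto
    define nn where "nn = (\<lambda>N. \<Prod>p\<in>S N. p ^ m N p)"
    have nn_pos: "nn N \<ge> 1" for N
      unfolding nn_def using prS[of N] prime_gt_0_nat
      by (metis One_nat_def Suc_leI power_not_zero prod_pos bot_nat_0.not_eq_extremum)
    have eq: "sigma_nat c (nn N) = GG c (EE c (b N))" for N
    proof -
      have "sigma_nat c (nn N) = sigma_steinitz c (b N)"
        unfolding nn_def b_def
        by (simp add: sigma_nat_prod[OF finS prS] sigma_steinitz_fin[OF finS prS])
      also have "\<dots> = GG c (EE c (b N))"
        using sigma_steinitz_GG[OF assms fin_in_steinitz[OF prS]] unfolding b_def by simp
      finally show ?thesis .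
    qed
    have conv: "(\<lambda>N. EE c (b N)) \<longlonglongrightarrow> EE c a"
    proof (rule tendsto_fun_componentwise)
      fix p
      show "(\<lambda>N. EE c (b N) p) \<longlonglongrightarrow> EE c a p"
      proof (cases "prime p")
        case False
        then show ?thesis by (simp add: EE_def)
      next
        case True
        show ?thesis
        proof (cases "a p")
          case (enat k)
          have "eventually (\<lambda>N. EE c (b N) p = EE c a p) sequentially"
            using eventually_ge_at_top[of "max k (Suc p)"]
          proof (rule eventually_mono)
            fix N assume "max k (Suc p) \<le> N"
            then show "EE c (b N) p = EE c a p"
              using True enat by (simp add: EE_def b_def S_def m_def ee_def)
          qed
          then show ?thesis by (rule tendsto_eventually)
        next
          case infinity
          have q: "norm (qq c p) < 1" using norm_qq_le[OF assms True] by simp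
          have "(\<lambda>N. qq c p ^ Suc N) \<longlonglongrightarrow> 0"
            by (rule LIMSEQ_Suc[OF LIMSEQ_power_zero[OF q]])
          moreover have "eventually (\<lambda>N. qq c p ^ Suc N = EE c (b N) p) sequentially"
            using eventually_ge_at_top[of "Suc p"]
          proof (rule eventually_mono)
            fix N assume "Suc p \<le> N"
            then show "qq c p ^ Suc N = EE c (b N) p"
              using True infinity by (simp add: EE_def b_def S_def m_def ee_def)
          qed
          ultimately have "(\<lambda>N. EE c (b N) p) \<longlonglongrightarrow> 0" by (rule Lim_transform_eventually)
          then show ?thesis using True infinity by (simp add: EE_def ee_def)
        qed
      qed
    qed
    have "(\<lambda>N. GG c (EE c (b N))) \<longlonglongrightarrow> GG c (EE c a)"
      using continuous_on_tendsto_compose[OF GG_cont[OF assms] conv EE_in_TT] EE_in_TT by simp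
    then have "(\<lambda>N. sigma_nat c (nn N)) \<longlonglongrightarrow> z"
      using eq a sigma_steinitz_GG[OF assms] by simp
    moreover have "sigma_nat c (nn N) \<in> sigma_nat c ` {n. n \<ge> 1}" for N using nn_pos by auto
    ultimately show "z \<in> closure (sigma_nat c ` {n. n \<ge> 1})"
      unfolding closure_sequential by (intro exI[of _ "\<lambda>N. sigma_nat c (nn N)"]) auto
  qed
qed

end
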